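(* Let $\hat y(x)=\frac1{2\pi}\arg(x)$ on $\Lambda$ and let $f(\xi):=\sum_{b\in\mathcal R_\xi}\psi'(D\hat y_b)$, $\xi\in\Lambda$, be the associated forces. Then $\hat\alpha\in[D\hat y]$ satisfies $\hat\alpha_b\in[-\tfrac13,\tfrac13]$ for all $b\in\mathcal B$, and there is a constant $C$ such that $|f(\xi)|\le C|\xi|^{-3}$ for all $\xi\in\Lambda$. In particular, $|f(\xi)|\le C_1(1+|\xi|)^{-t}$ for some $C_1$ and $t>2$.
   Context: $\mathsf R_6$ rotation by $\pi/3$, $a_1=(1,0)^T$, $a_i=\mathsf R_6^{i-1}a_1$, $\Lambda:=(\tfrac12,\tfrac{\sqrt3}{6})^T+\{ma_1+na_2:m,n\in\mathbb Z\}$. Bonds $\mathcal B=\{(\xi,\eta)\in\Lambda^2:|\xi-\eta|=1\}$ (ordered), $-b=(\eta,\xi)$, $\mathcal R_\xi=\{(\xi,\xi+a_i):i=1,\dots,6\}$, $Dy_b=y(\eta)-y(\xi)$. $[Dy]$ is the set of $\alpha:\mathcal B\to[-\frac12,\frac12]$ with $\alpha_{-b}=-\alpha_b$ and $Dy_b-\alpha_b\in\mathbb Z$. In $\hat y(x)=\frac1{2\pi}\arg(x)$, $x$ is identified with $x_1+ix_2$ and the branch cut is along the positive $x_1$-axis. The potential $\psi\in C(\mathbb R)\cap C^4(\mathbb R\setminus(\mathbb Z+\tfrac12))$ satisfies: ($\psi$1) 1-periodic; ($\psi$2) $\psi$ and $\psi(\tfrac12+\cdot)$ even; ($\psi$3)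 $\psi(r)=0$ iff $r\in\mathbb Z$; ($\psi$4) $\psi''(0)=\mu>0$; ($\psi$5) $\psi(x)\ge\frac12\psi''(0)x^2$ on $[-\frac12,\frac12]$. *)

theory Defs
  imports "HOL-Analysis.Analysis"
begin

text \<open>Points of the plane are identified with complex numbers x1 + i x2.\<close>

definition a_vec :: "nat \<Rightarrow> complex" where
  "a_vec i = cis (pi * real (i - 1) / 3)"

definition Lambda :: "complex set" where
  "Lambda = {Complex (1/2) (sqrt 3 / 6) + of_int m * a_vec 1 + of_int n * a_vec 2 | m n. True}"

definition Bonds :: "(complex \<times> complex) set" where
  "Bonds = {(\<xi>, \<eta>). \<xi> \<in> Lambda \<and> \<eta> \<in> Lambda \<and> cmod (\<xi> - \<eta>) = 1}"

definition neg_bond :: "complex \<times> complex \<Rightarrow> complex \<times> complex" where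
  "neg_bond b = (snd b, fst b)"

definition Rxi :: "complex \<Rightarrow> (complex \<times> complex) set" where
  "Rxi \<xi> = {(\<xi>, \<xi> + a_vec i) | i. i \<in> {1..6}}"

definition Dif :: "(complex \<Rightarrow> real) \<Rightarrow> complex \<times> complex \<Rightarrow> real" where
  "Dif y b = y (snd b) - y (fst b)"

definition DyClass :: "(complex \<Rightarrow> real) \<Rightarrow> ((complex \<times> complex) \<Rightarrow> real) set" where
  "DyClass y = {\<alpha>. \<forall>b\<in>Bonds. \<alpha> b \<in> {-1/2..1/2} \<and> \<alpha> (neg_bond b) = - \<alpha> b
                       \<and> Dif y b - \<alpha> b \<in> \<int>}"

text \<open>hat y(x) = arg(x)/(2 pi), branch cut along the positive x1-axis: arg in [0, 2 pi).\<close>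
definition yhat :: "complex \<Rightarrow> real" where
  "yhat x = Arg2pi x / (2 * pi)"

definition forces :: "(real \<Rightarrow> real) \<Rightarrow> complex \<Rightarrow> real" where
  "forces \<psi> \<xi> = (\<Sum>b\<in>Rxi \<xi>. deriv \<psi> (Dif yhat b))"

definition halfints :: "real set" where
  "halfints = {of_int k + 1/2 | k. True}"

definition C4_off :: "(real \<Rightarrow> real) \<Rightarrow> real set \<Rightarrow> bool" where
  "C4_off \<psi> S \<longleftrightarrow> (\<forall>k<4. \<forall>x\<in>S. (deriv ^^ k) \<psi> differentiable (at x))
                    \<and> continuous_on S ((deriv ^^ 4) \<psi>)"

end

theory Submission
  imports Defs
begin


definition om :: complex where "om = Complex (1/2) (sqrt 3 / 2)"

lemma om_sq: "om^2 = om - 1"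
  by (simp add: om_def complex_eq_iff power2_eq_square)

lemma cis60: "cis (pi/3) = om"
  by (simp add: om_def complex_eq_iff cos_60 sin_60)

lemma a_vec_pow: "a_vec i = om ^ (i - 1)"
proof -
  have "om ^ (i-1) = cis (real (i-1) * (pi/3))" using Complex.DeMoivre[of "pi/3" "i-1"] by (simp only: cis60)
  thus ?thesis by (simp add: a_vec_def mult.commute)
qed

lemma om3: "om^3 = -1"
proof -
  have "om^3 = om * om^2" by (simp add: power_def)
  also have "\<dots> = -1" by (simp add: om_sq algebra_simps power2_eq_square[symmetric] om_sq)
  finally show ?thesis .
qed

lemma a_vals: "a_vec 1 = 1" "a_vec 2 = om" "a_vec 3 = om - 1" "a_vec 4 = -1"
  "a_vec 5 = -om" "a_vec 6 = 1 - om"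
proof -
  have o4: "om^4 = -om" using om3 power_Suc2[of om 3] by simp
  have "om^5 = om^3 * om^2" by (simp flip: power_add)
  hence o5: "om^5 = 1 - om" by (simp add: om3 om_sq)
  show "a_vec 1 = 1" "a_vec 2 = om" "a_vec 3 = om - 1" "a_vec 4 = -1"
  "a_vec 5 = -om" "a_vec 6 = 1 - om" 
    by (simp_all add: a_vec_pow om_sq om3 o4 o5)
qed

lemma a_vec_Suc0[simp]: "a_vec (Suc 0) = 1" using a_vals(1) by simp

lemma Lambda_form: assumes "\<xi> \<in> Lambda"
  shows "\<exists>(m::int) (n::int). \<xi> = Complex (1/2 + of_int m + of_int n/2) (sqrt 3/6 + of_int n * sqrt 3/2)"
proof -
  obtain m n :: int where "\<xi> = Complex (1/2) (sqrt 3 / 6) + of_int m * a_vec 1 + of_int n * a_vec 2"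
    using assms unfolding Lambda_def by blast
  hence "\<xi> = Complex (1/2 + m + n/2) (sqrt 3/6 + n * sqrt 3/2)"
    unfolding a_vals by (simp add: om_def complex_eq_iff)
  thus ?thesis by blast
qed

lemma int_sq_ge: fixes k :: int assumes "k mod 3 \<noteq> 0" shows "(real_of_int k * sqrt 3 / 6)^2 \<ge> 1/12"
proof -
  have "k \<noteq> 0" using assms by auto
  hence k1: "1 \<le> \<bar>k\<bar>" by linarith
  have "1 \<le> \<bar>k\<bar> * \<bar>k\<bar>" using mult_mono[OF k1 k1] by simp
  hence "k^2 \<ge> 1" by (simp add: power2_eq_square)
  hence "real_of_int k ^ 2 \<ge> 1" by (metis of_int_1_le_iff of_int_power)
  thus ?thesis by (simp add: power_mult_distrib power_divide)
qed

lemma norm_a: "cmod (a_vec i) = 1" by (simp add: a_vec_def)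

lemma Im_bound: assumes "\<xi> \<in> Lambda" "i \<in> {1..6}"
  shows "(Im (\<xi> * cnj (a_vec i)))^2 \<ge> 1/12"
proof -
  obtain m n :: int where x: "\<xi> = Complex (1/2 + m + n/2) (sqrt 3/6 + n * sqrt 3/2)"
    using Lambda_form[OF assms(1)] by blast
  have i: "i = 1 \<or> i = 2 \<or> i = 3 \<or> i = 4 \<or> i = 5 \<or> i = 6" using assms(2) by auto
  have m1: "(1 + 3*n) mod 3 \<noteq> 0" "(-(1 + 3*m)) mod 3 \<noteq> 0" "(-(2 + 3*m + 3*n)) mod 3 \<noteq> 0"
     "(-(1 + 3*n)) mod 3 \<noteq> 0" "((1 + 3*m)) mod 3 \<noteq> 0" "((2 + 3*m + 3*n)) mod 3 \<noteq> 0" by presburger+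
  have e: "Im (\<xi> * cnj (a_vec 1)) = real_of_int (1 + 3*n) * sqrt 3 / 6"
    "Im (\<xi> * cnj (a_vec 2)) = real_of_int (-(1 + 3*m)) * sqrt 3 / 6"
    "Im (\<xi> * cnj (a_vec 3)) = real_of_int (-(2 + 3*m + 3*n)) * sqrt 3 / 6"
    "Im (\<xi> * cnj (a_vec 4)) = real_of_int (-(1 + 3*n)) * sqrt 3 / 6"
    "Im (\<xi> * cnj (a_vec 5)) = real_of_int ((1 + 3*m)) * sqrt 3 / 6"
    "Im (\<xi> * cnj (a_vec 6)) = real_of_int ((2 + 3*m + 3*n)) * sqrt 3 / 6"
    by (simp_all add: x a_vals om_def field_simps)
  note g = int_sq_ge[OF m1(1)] int_sq_ge[OF m1(2)] int_sq_ge[OF m1(3)] int_sq_ge[OF m1(4)] int_sq_ge[OF m1(5)] int_sq_ge[OF m1(6)]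
  from i show ?thesis
  proof (elim disjE)
  qed (simp_all only: e g)
qed

lemma key_ineq: fixes x y :: real assumes y: "y^2 \<ge> 1/12"
  shows "2*(x^2+x+y^2) + sqrt ((x^2+x+y^2)^2 + y^2) \<ge> 0"
proof -
  define P where "P = x^2+x+y^2"
  define s where "s = y^2"
  show ?thesis
  proof (cases "P \<ge> 0")
    case True thus ?thesis unfolding P_def[symmetric] by simp
  next
    case False
    have "0 \<le> (x+1/2)^2" by simp
    hence "x^2 + x \<ge> -1/4" by (simp add: power2_eq_square algebra_simps)
    hence hP: "0 \<le> -P" "-P \<le> 1/4 - s" using False unfolding P_def s_def by linarith+
    have "(-P)^2 \<le> (1/4 - s)^2" using hP power_mono by blast
    moreover have "(s - 1/12)*(s - 3/4) \<le> 0" 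
      using hP y unfolding s_def by (intro mult_nonneg_nonpos) linarith+
    ultimately have "P * P \<le> 1/16 - s/2 + s * s" "s * s - 5/6 * s + 1/16 \<le> 0"
      by (simp_all add: power2_eq_square algebra_simps)
    hence "3*P^2 \<le> s" unfolding power2_eq_square by linarith
    hence "-2*P \<le> sqrt (P^2+s)" by (intro real_le_rsqrt) (simp add: power2_eq_square)
    thus ?thesis unfolding P_def s_def by linarith
  qed
qed

lemma angle_lemma: assumes y: "(Im z)^2 \<ge> 1/12" shows "\<bar>Arg ((z+1)/z)\<bar> \<le> 2*pi/3"
proof -
  define x y where "x = Re z" and "y = Im z"
  have z0: "z \<noteq> 0" using y by auto
  define u where "u = (z+1) * cnj z"
  have Re_u: "Re u = x^2+x+y^2" unfolding u_def x_def y_def by (simp add: power2_eq_square algebra_simps)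
  have Im_u: "Im u = - y" unfolding u_def x_def y_def by (simp add: algebra_simps)
  have nu: "cmod u = sqrt ((x^2+x+y^2)^2 + y^2)" unfolding cmod_def Re_u Im_u by simp
  have "y \<noteq> 0" using y unfolding y_def by auto
  hence u0: "u \<noteq> 0" using Im_u by auto
  define rr where "rr = (cmod z)^2"
  have rr: "rr > 0" unfolding rr_def using z0 by simp
  have r: "z * cnj z = of_real rr" unfolding rr_def by (simp add: complex_norm_square[symmetric])
  have "(z+1)/z = u / of_real rr" unfolding u_def r[symmetric] using z0
    by (simp add: field_simps)
  hence aw: "Arg ((z+1)/z) = Arg u" using Arg_divide_of_real[OF rr] by simp
  have "2*(x^2+x+y^2) + sqrt ((x^2+x+y^2)^2 + y^2) \<ge> 0" using key_ineq y unfolding y_def by blast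
  moreover have "cmod u > 0" using u0 by simp
  ultimately have cge: "cos (Arg u) \<ge> -1/2" unfolding cos_Arg[OF u0] Re_u using nu
    by (simp add: field_simps)
  show ?thesis
  proof (rule ccontr)
    assume "\<not> ?thesis"
    hence a: "\<bar>Arg u\<bar> > 2*pi/3" unfolding aw by simp
    have "\<bar>Arg u\<bar> \<le> pi" using Arg_bounded[of u] by linarith
    hence "cos \<bar>Arg u\<bar> < cos (2*pi/3)" using a by (subst cos_mono_less_eq) auto
    hence "cos (Arg u) < -1/2" by (simp add: cos_120)
    thus False using cge by simp
  qed
qed

lemma dir_angle: assumes "\<xi> \<in> Lambda" "i \<in> {1..6}"
  shows "\<xi> \<noteq> 0 \<and> \<bar>Arg ((\<xi> + a_vec i)/\<xi>)\<bar> \<le> 2*pi/3"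
proof -
  define z where "z = \<xi> * cnj (a_vec i)"
  have y: "(Im z)^2 \<ge> 1/12" using Im_bound[OF assms] unfolding z_def .
  have "a_vec i * cnj (a_vec i) = 1" using complex_norm_square[of "a_vec i"] norm_a by simp
  hence xz: "\<xi> = z * a_vec i" unfolding z_def by (simp add: mult.assoc mult.commute)
  have z0: "z \<noteq> 0" using y by auto
  have a0: "a_vec i \<noteq> 0" using norm_a[of i] by auto
  have "(\<xi> + a_vec i)/\<xi> = (z+1)/z" unfolding xz using a0 z0 by (simp add: field_simps)
  thus ?thesis using angle_lemma[OF y] xz z0 a0 by simp
qed

lemma int_unit: fixes p q :: int assumes "p^2 + p*q + q^2 = 1"
  shows "(p,q) \<in> {(1,0),(0,1),(-1,1),(-1,0),(0,-1),(1,-1)}"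
proof -
  have e1: "(2*p+q)^2 + 3*q^2 = 4" using assms by (simp add: power2_eq_square algebra_simps)
  have e2: "(2*q+p)^2 + 3*p^2 = 4" using assms by (simp add: power2_eq_square algebra_simps)
  have sq: "\<bar>r\<bar> \<le> 1" if "3*r^2 \<le> 4" for r :: int
  proof (rule ccontr)
    assume "\<not> \<bar>r\<bar> \<le> 1" hence r2: "2 \<le> \<bar>r\<bar>" by simp
    have "4 \<le> \<bar>r\<bar> * \<bar>r\<bar>" using mult_mono[OF r2 r2] by simp
    thus False using that by (simp add: power2_eq_square)
  qed
  have "3*q^2 \<le> 4" using e1 zero_le_power2[of "2*p+q"] by linarith
  hence q: "\<bar>q\<bar> \<le> 1" by (rule sq)
  have "3*p^2 \<le> 4" using e2 zero_le_power2[of "2*q+p"] by linarith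
  hence p: "\<bar>p\<bar> \<le> 1" by (rule sq)
  have "p \<in> {-1,0,1}" "q \<in> {-1,0,1}" using p q by auto
  thus ?thesis using assms by auto
qed

lemma bond_dir: assumes "b \<in> Bonds" shows "\<exists>i\<in>{1..6}. snd b = fst b + a_vec i"
proof -
  obtain \<xi> \<eta> where b: "b = (\<xi>, \<eta>)" "\<xi> \<in> Lambda" "\<eta> \<in> Lambda" "cmod (\<xi> - \<eta>) = 1"
    using assms unfolding Bonds_def by auto
  obtain m n :: int where x: "\<xi> = Complex (1/2 + m + n/2) (sqrt 3/6 + n * sqrt 3/2)"
    using Lambda_form[OF b(2)] by blast
  obtain m' n' :: int where y: "\<eta> = Complex (1/2 + m' + n'/2) (sqrt 3/6 + n' * sqrt 3/2)"
    using Lambda_form[OF b(3)] by blast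
  define p q where "p = m' - m" and "q = n' - n"
  have d: "\<eta> - \<xi> = Complex (p + q/2) (q * sqrt 3 / 2)" unfolding x y p_def q_def
    by (simp add: complex_eq_iff field_simps)
  have "cmod (\<eta> - \<xi>) = 1" using b(4) by (simp add: norm_minus_commute)
  hence "(p + q/2)^2 + (q * sqrt 3/2)^2 = 1" unfolding d cmod_def by simp
  hence "real_of_int (p^2 + p*q + q^2) = 1" by (simp add: power2_eq_square field_simps)
  hence "p^2 + p*q + q^2 = 1" by linarith
  hence pq: "(p,q) \<in> {(1,0),(0,1),(-1,1),(-1,0),(0,-1),(1,-1)}" by (rule int_unit)
  have "\<exists>i\<in>{1..6}. \<eta> - \<xi> = a_vec i"
  proof -
    have "\<eta> - \<xi> \<in> {a_vec 1, a_vec 2, a_vec 3, a_vec 4, a_vec 5, a_vec 6}"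
      using pq unfolding d a_vals by (auto simp: om_def complex_eq_iff)
    moreover have "{1..6::nat} = {1,2,3,4,5,6}" by auto
    ultimately show ?thesis by auto
  qed
  thus ?thesis using b(1) by (auto simp: algebra_simps)
qed

lemma cis_Arg2pi: "z \<noteq> 0 \<Longrightarrow> cis (Arg2pi z) = sgn z"
proof -
  assume z: "z \<noteq> 0"
  have "z = of_real (norm z) * cis (Arg2pi z)" using Arg2pi_eq[of z] by (simp add: cis_conv_exp)
  moreover have "complex_of_real (norm z) \<noteq> 0" using z by simp
  ultimately have "cis (Arg2pi z) = z / complex_of_real (norm z)" by (simp add: field_simps)
  thus ?thesis by (simp add: sgn_eq)
qed

lemma cis_eq_int: "cis a = cis b \<Longrightarrow> \<exists>k::int. a = b + 2*pi*k"
  using sin_cos_eq_iff[of a b] by (simp add: complex_eq_iff)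

lemma Dif_Arg: assumes "\<xi> \<noteq> 0" "\<eta> \<noteq> 0"
  shows "\<exists>k::int. Dif yhat (\<xi>,\<eta>) = Arg (\<eta>/\<xi>)/(2*pi) + k"
proof -
  have "cis (Arg2pi \<eta> - Arg2pi \<xi>) = sgn \<eta> / sgn \<xi>"
    using assms by (simp add: cis_Arg2pi flip: cis_divide)
  also have "\<dots> = sgn (\<eta>/\<xi>)" using assms by (simp add: sgn_div_norm norm_divide field_simps)
  also have "\<dots> = cis (Arg (\<eta>/\<xi>))" using assms by (simp add: cis_Arg)
  finally obtain k :: int where "Arg2pi \<eta> - Arg2pi \<xi> = Arg (\<eta>/\<xi>) + 2*pi*k" using cis_eq_int by blast
  hence "Dif yhat (\<xi>,\<eta>) = Arg (\<eta>/\<xi>)/(2*pi) + k" unfolding Dif_def yhat_def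
    by (simp add: field_simps diff_divide_distrib[symmetric])
  thus ?thesis by blast
qed

lemma Lambda_nz: "\<xi> \<in> Lambda \<Longrightarrow> \<xi> \<noteq> 0"
  using dir_angle[of \<xi> 1] by simp

lemma bond_angle: assumes "b \<in> Bonds"
  shows "fst b \<noteq> 0 \<and> snd b \<noteq> 0 \<and> \<bar>Arg (snd b / fst b)\<bar> \<le> 2*pi/3"
proof -
  obtain i where i: "i \<in> {1..6}" "snd b = fst b + a_vec i" using bond_dir[OF assms] by blast
  have L: "fst b \<in> Lambda" "snd b \<in> Lambda" using assms unfolding Bonds_def by auto
  show ?thesis using dir_angle[OF L(1) i(1)] i(2) Lambda_nz[OF L(2)] by simp
qed

lemma frac_small: fixes r :: real and k :: int assumes "\<bar>r\<bar> \<le> 1/3" "\<bar>r + k\<bar> \<le> 1/2" shows "k = 0"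
proof -
  have "\<bar>real_of_int k\<bar> < 1" using assms by linarith
  thus ?thesis by linarith
qed

lemma part1: "DyClass yhat \<noteq> {}"
proof -
  define \<alpha> where "\<alpha> b = (if b \<in> Bonds then Arg (snd b / fst b)/(2*pi) else 0)" for b
  have "\<alpha> \<in> DyClass yhat" unfolding DyClass_def
  proof (intro CollectI ballI conjI)
    fix b assume b: "b \<in> Bonds"
    note ba = bond_angle[OF b]
    have nb: "neg_bond b \<in> Bonds" using b unfolding Bonds_def neg_bond_def by (auto simp: norm_minus_commute)
    have ab: "\<bar>\<alpha> b\<bar> \<le> 1/3" using ba b pi_gt_zero unfolding \<alpha>_def by (simp add: field_simps)
    show "\<alpha> b \<in> {-1/2..1/2}" using ab unfolding atLeastAtMost_iff by linarith
    have "Arg (fst b / snd b) = - Arg (snd b / fst b)"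
    proof -
      have inv: "fst b / snd b = inverse (snd b / fst b)" by simp
      show ?thesis
      proof (cases "snd b / fst b \<in> \<real>")
        case True
        hence "Arg (snd b / fst b) = 0 \<or> Arg (snd b / fst b) = pi" by (simp add: Arg_real)
        hence "Arg (snd b / fst b) = 0" using ba pi_gt_zero by auto
        thus ?thesis unfolding inv Arg_inverse using True by simp
      next
        case False thus ?thesis unfolding inv Arg_inverse by simp
      qed
    qed
    thus "\<alpha> (neg_bond b) = - \<alpha> b" using b nb unfolding \<alpha>_def neg_bond_def by simp
    obtain k :: int where k: "Dif yhat (fst b, snd b) = Arg (snd b / fst b)/(2*pi) + k"
      using Dif_Arg ba by blast
    show "Dif yhat b - \<alpha> b \<in> \<int>" using k b unfolding \<alpha>_def by simp
  qed
  thus ?thesis by blast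
qed

lemma part2: "\<forall>\<alpha>\<in>DyClass yhat. \<forall>b\<in>Bonds. \<alpha> b \<in> {-1/3..1/3}"
proof (intro ballI)
  fix \<alpha> b assume a: "\<alpha> \<in> DyClass yhat" and b: "b \<in> Bonds"
  note ba = bond_angle[OF b]
  have h: "\<alpha> b \<in> {-1/2..1/2}" "Dif yhat b - \<alpha> b \<in> \<int>" using a b unfolding DyClass_def by auto
  obtain j where j: "Dif yhat b - \<alpha> b = of_int j" using h(2) Ints_cases by blast
  obtain k :: int where k: "Dif yhat (fst b, snd b) = Arg (snd b / fst b)/(2*pi) + k"
      using Dif_Arg ba by blast
  define r where "r = Arg (snd b / fst b)/(2*pi)"
  have r: "\<bar>r\<bar> \<le> 1/3" using ba pi_gt_zero unfolding r_def by (simp add: field_simps)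
  have ab: "\<alpha> b = r + of_int (k - j)" using j k unfolding r_def by simp
  have "\<bar>r + of_int (k - j)\<bar> \<le> 1/2" using h(1) unfolding ab[symmetric] atLeastAtMost_iff by linarith
  hence "k - j = 0" using frac_small[OF r] by blast
  hence "\<alpha> b = r" using j k unfolding r_def by simp
  thus "\<alpha> b \<in> {-1/3..1/3}" using r unfolding atLeastAtMost_iff by linarith
qed

lemma prod6: "(\<Prod>i\<in>{1..6::nat}. f i) = f 1 * f 2 * f 3 * f 4 * f 5 * f 6"
  by (simp add: numeral_eq_Suc mult.assoc)

lemma sum6: "(\<Sum>i\<in>{1..6::nat}. f i) = f 1 + f 2 + f 3 + f 4 + f 5 + f 6"
  by (simp add: numeral_eq_Suc add.assoc)

lemma prod_id: "(\<Prod>i\<in>{1..6::nat}. 1 + a_vec i * w) = 1 - w^6"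
  unfolding prod6 a_vals using om_sq by algebra

lemma cis_sum: "finite A \<Longrightarrow> cis (sum f A) = (\<Prod>i\<in>A. cis (f i))"
  by (induction A rule: finite_induct) (auto simp flip: cis_mult)

lemma sgn_prod: "finite A \<Longrightarrow> sgn (\<Prod>i\<in>A. (f i :: complex)) = (\<Prod>i\<in>A. sgn (f i))"
  by (induction A rule: finite_induct) (auto simp: sgn_mult)

lemma small_arg: assumes "cmod z \<le> 1/2" shows "\<bar>Arg (1 + z)\<bar> \<le> 2 * cmod z"
proof -
  have "\<bar>Re z\<bar> \<le> cmod z" by (rule abs_Re_le_cmod)
  hence re: "Re (1 + z) \<ge> 1/2" using assms by simp
  have "\<bar>Im z\<bar> \<le> cmod z" by (rule abs_Im_le_cmod)
  have "\<bar>Arg (1 + z)\<bar> = \<bar>arctan (Im z / Re (1 + z))\<bar>" using re by (simp add: arg_conv_arctan)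
  also have "\<dots> \<le> \<bar>Im z / Re (1 + z)\<bar>" by (rule abs_arctan_le)
  also have "\<dots> = \<bar>Im z\<bar> / Re (1 + z)" using re by simp
  also have "\<dots> \<le> cmod z / (1/2)" using re \<open>\<bar>Im z\<bar> \<le> cmod z\<close>
    by (intro frac_le) auto
  finally show ?thesis by simp
qed

lemma angle_sum: assumes "cmod \<xi> \<ge> 4"
  shows "\<bar>\<Sum>i\<in>{1..6}. Arg ((\<xi> + a_vec i)/\<xi>)\<bar> \<le> 2 * (1 / cmod \<xi>)^6"
proof -
  define w where "w = 1 / \<xi>"
  have x0: "\<xi> \<noteq> 0" using assms by auto
  have nw: "cmod w = 1 / cmod \<xi>" unfolding w_def by (simp add: norm_divide)
  have nw4: "cmod w \<le> 1/4" unfolding nw by (rule frac_le) (use assms in auto)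
  have e: "(\<xi> + a_vec i)/\<xi> = 1 + a_vec i * w" for i unfolding w_def using x0 by (simp add: field_simps)
  have na: "cmod (a_vec i * w) = cmod w" for i by (simp add: norm_mult norm_a)
  have each: "\<bar>Arg (1 + a_vec i * w)\<bar> \<le> 2 * cmod w" for i
    using small_arg[of "a_vec i * w"] na nw4 by simp
  have ne: "1 + a_vec i * w \<noteq> 0" for i
  proof
    assume "1 + a_vec i * w = 0"
    hence "a_vec i * w = -1" by (simp add: add_eq_0_iff)
    hence "cmod (a_vec i * w) = 1" by simp
    thus False using na nw4 by simp
  qed
  have w6: "cmod (w^6) \<le> 1/2"
  proof -
    have "cmod (w^6) = cmod w ^ 6" by (simp add: norm_power)
    also have "\<dots> \<le> (1/4)^6" using nw4 by (intro power_mono) auto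
    also have "(1/4::real)^6 \<le> 1/2" by (simp add: power_divide)
    finally show ?thesis .
  qed
  have n6: "1 - w^6 \<noteq> 0"
  proof
    assume "1 - w^6 = 0" hence "w^6 = 1" by simp
    thus False using w6 by simp
  qed
  define S where "S = (\<Sum>i\<in>{1..6::nat}. Arg (1 + a_vec i * w))"
  have "cis S = (\<Prod>i\<in>{1..6::nat}. cis (Arg (1 + a_vec i * w)))" unfolding S_def by (simp add: cis_sum)
  also have "\<dots> = (\<Prod>i\<in>{1..6::nat}. sgn (1 + a_vec i * w))" using ne by (simp add: cis_Arg)
  also have "\<dots> = sgn (1 - w^6)" using sgn_prod[of "{1..6::nat}" "\<lambda>i. 1 + a_vec i * w"] prod_id[of w] by simp
  also have "\<dots> = cis (Arg (1 - w^6))" using n6 by (simp add: cis_Arg)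
  finally obtain k :: int where k: "S = Arg (1 - w^6) + 2*pi*k" using cis_eq_int by blast
  have "\<bar>S\<bar> \<le> (\<Sum>i\<in>{1..6::nat}. \<bar>Arg (1 + a_vec i * w)\<bar>)" unfolding S_def by (rule sum_abs)
  also have "\<dots> \<le> (\<Sum>i\<in>{1..6::nat}. 2 * cmod w)" by (intro sum_mono each)
  also have "\<dots> \<le> 3" using nw4 by simp
  finally have S3: "\<bar>S\<bar> \<le> 3" .
  have A6: "\<bar>Arg (1 - w^6)\<bar> \<le> 2 * cmod (w^6)" using small_arg[of "- (w^6)"] w6 by simp
  hence "\<bar>Arg (1 - w^6)\<bar> \<le> 1" using w6 by simp
  hence "\<bar>2*pi*k\<bar> \<le> 4" using S3 k by linarith
  moreover have "pi > 3" by (rule pi_gt3)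
  ultimately have "\<bar>real_of_int k\<bar> < 1"
  proof -
    assume a: "\<bar>2*pi*k\<bar> \<le> 4" "pi > 3"
    have "2*pi*\<bar>real_of_int k\<bar> \<le> 4" using a(1) by (simp add: abs_mult)
    show ?thesis
    proof (rule ccontr)
      assume "\<not> \<bar>real_of_int k\<bar> < 1" hence "1 \<le> \<bar>real_of_int k\<bar>" by simp
      hence "2*pi*1 \<le> 2*pi*\<bar>real_of_int k\<bar>" by (intro mult_left_mono) auto
      thus False using a \<open>2*pi*\<bar>real_of_int k\<bar> \<le> 4\<close> by linarith
    qed
  qed
  hence "k = 0" by linarith
  hence "S = Arg (1 - w^6)" using k by simp
  hence "\<bar>S\<bar> \<le> 2 * (1/cmod \<xi>)^6" using A6 nw by (simp add: norm_power)
  thus ?thesis unfolding S_def e[symmetric] .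
qed

lemma angle_each: assumes "cmod \<xi> \<ge> 4"
  shows "\<bar>Arg ((\<xi> + a_vec i)/\<xi>)\<bar> \<le> 2 / cmod \<xi>"
proof -
  define w where "w = 1 / \<xi>"
  have x0: "\<xi> \<noteq> 0" using assms by auto
  have nw: "cmod w = 1 / cmod \<xi>" unfolding w_def by (simp add: norm_divide)
  have nw4: "cmod w \<le> 1/4" unfolding nw by (rule frac_le) (use assms in auto)
  have e: "(\<xi> + a_vec i)/\<xi> = 1 + a_vec i * w" unfolding w_def using x0 by (simp add: field_simps)
  have na: "cmod (a_vec i * w) = cmod w" by (simp add: norm_mult norm_a)
  show ?thesis using small_arg[of "a_vec i * w"] na nw4 nw unfolding e by simp
qed



lemma periodic_nat: fixes \<psi> :: "real \<Rightarrow> real" assumes p: "\<And>x. \<psi> (x + 1) = (\<psi> x :: real)" shows "\<psi> (x + real n) = \<psi> x"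
proof (induction n)
  case 0 thus ?case by simp
next
  case (Suc n)
  have "\<psi> (x + real (Suc n)) = \<psi> ((x + real n) + 1)" by (simp add: algebra_simps)
  also have "\<dots> = \<psi> (x + real n)" by (rule p)
  finally show ?case using Suc by simp
qed

lemma periodic_int: fixes \<psi> :: "real \<Rightarrow> real" assumes p: "\<And>x. \<psi> (x + 1) = (\<psi> x :: real)" shows "\<psi> (x + of_int k) = \<psi> x"
proof (cases "k \<ge> 0")
  case True
  then obtain n where "k = int n" by (metis nonneg_eq_int)
  thus ?thesis using periodic_nat[where \<psi>=\<psi>, OF p] by simp
next
  case False
  define n where "n = nat (-k)"
  have k: "k = - int n" using False unfolding n_def by simp
  have "\<psi> x = \<psi> ((x - real n) + real n)" by simp
  also have "\<dots> = \<psi> (x - real n)" by (rule periodic_nat[where \<psi>=\<psi>, OF p])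
  finally show ?thesis using k by simp
qed

lemma deriv_periodic: fixes \<psi> :: "real \<Rightarrow> real" assumes p: "\<And>x. \<psi> (x + 1) = (\<psi> x :: real)"
  shows "deriv \<psi> (x + of_int k) = deriv \<psi> x"
proof -
  have e: "(\<lambda>t. \<psi> (t + of_int k)) = \<psi>" using periodic_int[where \<psi>=\<psi>, OF p] by auto
  show ?thesis unfolding deriv_def DERIV_shift e ..
qed

lemma not_half: assumes "\<bar>t\<bar> \<le> 1/3" shows "t \<in> - halfints"
proof
  assume "t \<in> halfints"
  then obtain k :: int where t: "t = of_int k + 1/2" unfolding halfints_def by blast
  show False
  proof (cases "k \<ge> 0")
    case True hence "real_of_int k \<ge> 0" by simp
    thus False using t assms by linarith
  next
    case False hence "real_of_int k \<le> -1" by simp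
    thus False using t assms by linarith
  qed
qed

lemma taylor:
  fixes \<psi> :: "real \<Rightarrow> real"
  assumes C4: "C4_off \<psi> (- halfints)"
    and psi2a: "\<And>x. \<psi> (- x) = \<psi> x"
    and psi4: "deriv (deriv \<psi>) 0 = \<mu>"
  shows "\<exists>K\<ge>0. \<forall>x. \<bar>x\<bar> \<le> 1/3 \<longrightarrow> \<bar>deriv \<psi> x - \<mu> * x\<bar> \<le> K * \<bar>x\<bar>^3"
proof -
  have dif: "(deriv ^^ k) \<psi> differentiable (at t)" if "k < 4" "\<bar>t\<bar> \<le> 1/3" for k t
    using C4 not_half[OF that(2)] that(1) unfolding C4_off_def by blast
  have D: "DERIV ((deriv ^^ k) \<psi>) t :> (deriv ^^ Suc k) \<psi> t" if "k < 4" "\<bar>t\<bar> \<le> 1/3" for k t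
    using dif[OF that] DERIV_deriv_iff_real_differentiable by fastforce
  have odd: "deriv \<psi> (- x) = - deriv \<psi> x" if "\<bar>x\<bar> \<le> 1/3" for x
  proof -
    have "DERIV \<psi> x :> deriv \<psi> x" using D[of 0 x] that by simp
    hence "DERIV (\<lambda>t. \<psi> (- t)) x :> deriv \<psi> x" using psi2a by simp
    hence "DERIV \<psi> (- x) :> - deriv \<psi> x" using DERIV_mirror[where f=\<psi> and x=x and y="- deriv \<psi> x"] by simp
    thus ?thesis by (rule DERIV_imp_deriv)
  qed
  have sub: "{-1/3..1/3} \<subseteq> - halfints"
  proof
    fix t :: real assume "t \<in> {-1/3..1/3}" hence "\<bar>t\<bar> \<le> 1/3" by auto
    thus "t \<in> - halfints" by (rule not_half)
  qed
  have cont: "continuous_on {-1/3..1/3} ((deriv ^^ 4) \<psi>)"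
    using C4 sub unfolding C4_off_def using continuous_on_subset by blast
  have "compact ((deriv ^^ 4) \<psi> ` {-1/3..1/3})" by (rule compact_continuous_image[OF cont compact_Icc])
  hence "bounded ((deriv ^^ 4) \<psi> ` {-1/3..1/3})" by (rule compact_imp_bounded)
  then obtain B where B': "\<forall>y\<in>(deriv ^^ 4) \<psi> ` {-1/3..1/3}. norm y \<le> B"
    unfolding bounded_iff by blast
  have B: "\<bar>(deriv ^^ 4) \<psi> t\<bar> \<le> B" if "t \<in> {-1/3..1/3}" for t
    using B' that by (metis image_eqI real_norm_def)
  have B0: "B \<ge> 0" using B[of 0] by simp
  define diff where "diff m = (deriv ^^ Suc m) \<psi>" for m
  have mac: "\<exists>t. \<bar>t\<bar> \<le> \<bar>y\<bar> \<and> deriv \<psi> y = (\<Sum>m<3. diff m 0 / fact m * y ^ m) + diff 3 t / fact 3 * y ^ 3"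
    if "\<bar>y\<bar> \<le> 1/3" for y
  proof (rule Maclaurin_bi_le)
    show "diff 0 = deriv \<psi>" unfolding diff_def by simp
    show "\<forall>m t. m < 3 \<and> \<bar>t\<bar> \<le> \<bar>y\<bar> \<longrightarrow> DERIV (diff m) t :> diff (Suc m) t"
    proof (intro allI impI)
      fix m :: nat and t :: real assume a: "m < 3 \<and> \<bar>t\<bar> \<le> \<bar>y\<bar>"
      hence "Suc m < 4" "\<bar>t\<bar> \<le> 1/3" using that by auto
      thus "DERIV (diff m) t :> diff (Suc m) t" unfolding diff_def by (rule D)
    qed
  qed
  have "\<bar>deriv \<psi> x - \<mu> * x\<bar> \<le> B/6 * \<bar>x\<bar>^3" if x: "\<bar>x\<bar> \<le> 1/3" for x
  proof -
    obtain t where t: "\<bar>t\<bar> \<le> \<bar>x\<bar>" "deriv \<psi> x = (\<Sum>m<3. diff m 0 / fact m * x ^ m) + diff 3 t / fact 3 * x ^ 3"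
      using mac[OF x] by blast
    obtain t' where t': "\<bar>t'\<bar> \<le> \<bar>x\<bar>" "deriv \<psi> (-x) = (\<Sum>m<3. diff m 0 / fact m * (-x) ^ m) + diff 3 t' / fact 3 * (-x) ^ 3"
      using mac[of "-x"] x by auto
    have f3: "(fact 3 :: real) = 6" by (simp add: numeral_3_eq_3)
    have d1: "diff 1 0 = \<mu>" unfolding diff_def using psi4 by (simp add: numeral_2_eq_2)
    have s3: "(\<Sum>m<3. f m) = f 0 + f 1 + f 2" for f :: "nat \<Rightarrow> real" by (simp add: numeral_3_eq_3 numeral_2_eq_2)
    have "deriv \<psi> x = (deriv \<psi> x - deriv \<psi> (-x))/2" using odd[OF x] by simp
    also have "\<dots> = \<mu> * x + (diff 3 t + diff 3 t') / 12 * x^3"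
      unfolding t(2) t'(2) s3 d1 f3 by (simp add: field_simps power_minus_odd)
    finally have e: "deriv \<psi> x - \<mu> * x = (diff 3 t + diff 3 t') / 12 * x^3" by simp
    have d3: "diff 3 = (deriv ^^ 4) \<psi>" unfolding diff_def by (simp add: eval_nat_numeral)
    have "t \<in> {-1/3..1/3}" "t' \<in> {-1/3..1/3}" using t(1) t'(1) x by auto
    hence "\<bar>diff 3 t\<bar> \<le> B" "\<bar>diff 3 t'\<bar> \<le> B" unfolding d3 using B by auto
    hence "\<bar>(diff 3 t + diff 3 t') / 12\<bar> \<le> B/6" by simp
    hence "\<bar>(diff 3 t + diff 3 t') / 12\<bar> * \<bar>x\<bar>^3 \<le> B/6 * \<bar>x\<bar>^3" by (intro mult_right_mono) auto
    thus ?thesis unfolding e by (simp add: abs_mult power_abs)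
  qed
  thus ?thesis using B0 by (intro exI[of _ "B/6"]) auto
qed

lemma a_inj: "inj_on a_vec {1..6}"
proof (rule inj_onI)
  fix i j assume h: "i \<in> {1..6::nat}" "j \<in> {1..6::nat}" "a_vec i = a_vec j"
  have i: "i = 1 \<or> i = 2 \<or> i = 3 \<or> i = 4 \<or> i = 5 \<or> i = 6" using h(1) by auto
  have j: "j = 1 \<or> j = 2 \<or> j = 3 \<or> j = 4 \<or> j = 5 \<or> j = 6" using h(2) by auto
  from i j h(3) show "i = j" by (elim disjE) (simp_all add: a_vals om_def complex_eq_iff)
qed

lemma shift_nz: assumes "\<xi> \<in> Lambda" "i \<in> {1..6}" shows "\<xi> + a_vec i \<noteq> 0"
proof
  assume h: "\<xi> + a_vec i = 0"
  define z where "z = \<xi> * cnj (a_vec i)"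
  have y: "(Im z)^2 \<ge> 1/12" using Im_bound[OF assms] unfolding z_def .
  have "a_vec i * cnj (a_vec i) = 1" using complex_norm_square[of "a_vec i"] norm_a by simp
  hence "(\<xi> + a_vec i) * cnj (a_vec i) = z + 1" unfolding z_def by (simp add: distrib_right)
  hence "z + 1 = 0" using h by simp
  hence "Im z = 0" by (simp add: complex_eq_iff)
  thus False using y by simp
qed

lemma forces_sum:
  fixes \<psi> :: "real \<Rightarrow> real"
  assumes p: "\<And>x. \<psi> (x + 1) = \<psi> x" and x: "\<xi> \<in> Lambda"
  shows "forces \<psi> \<xi> = (\<Sum>i\<in>{1..6}. deriv \<psi> (Arg ((\<xi> + a_vec i)/\<xi>)/(2*pi)))"
proof -
  have R: "Rxi \<xi> = (\<lambda>i. (\<xi>, \<xi> + a_vec i)) ` {1..6}" unfolding Rxi_def by auto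
  have inj: "inj_on (\<lambda>i. (\<xi>, \<xi> + a_vec i)) {1..6}" using a_inj unfolding inj_on_def by auto
  have "forces \<psi> \<xi> = (\<Sum>i\<in>{1..6}. deriv \<psi> (Dif yhat (\<xi>, \<xi> + a_vec i)))"
    unfolding forces_def R sum.reindex[OF inj] by simp
  also have "\<dots> = (\<Sum>i\<in>{1..6}. deriv \<psi> (Arg ((\<xi> + a_vec i)/\<xi>)/(2*pi)))"
  proof (rule sum.cong[OF refl])
    fix i assume i: "i \<in> {1..6::nat}"
    obtain k :: int where k: "Dif yhat (\<xi>, \<xi> + a_vec i) = Arg ((\<xi> + a_vec i)/\<xi>)/(2*pi) + k"
      using Dif_Arg[OF Lambda_nz[OF x] shift_nz[OF x i]] by blast
    show "deriv \<psi> (Dif yhat (\<xi>, \<xi> + a_vec i)) = deriv \<psi> (Arg ((\<xi> + a_vec i)/\<xi>)/(2*pi))"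
      unfolding k by (rule deriv_periodic[where \<psi>=\<psi>, OF p])
  qed
  finally show ?thesis .
qed

lemma part3:
  fixes \<psi> :: "real \<Rightarrow> real"
  assumes C4: "C4_off \<psi> (- halfints)"
    and psi1: "\<And>x. \<psi> (x + 1) = \<psi> x"
    and psi2a: "\<And>x. \<psi> (- x) = \<psi> x"
    and psi4: "deriv (deriv \<psi>) 0 = \<mu>" "\<mu> > 0"
  shows "\<exists>C\<ge>0. \<forall>\<xi>\<in>Lambda. \<bar>forces \<psi> \<xi>\<bar> \<le> C * cmod \<xi> powr (-3)"
proof -
  obtain K where K0: "K \<ge> 0" and K: "\<And>x. \<bar>x\<bar> \<le> 1/3 \<Longrightarrow> \<bar>deriv \<psi> x - \<mu> * x\<bar> \<le> K * \<bar>x\<bar>^3"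
    using taylor[OF C4 psi2a psi4(1)] by blast
  define M where "M = \<mu>/3 + K/27"
  have M0: "M \<ge> 0" unfolding M_def using K0 psi4(2) by simp
  have gb: "\<bar>deriv \<psi> x\<bar> \<le> M" if x: "\<bar>x\<bar> \<le> 1/3" for x
  proof -
    have "\<bar>x\<bar>^3 \<le> (1/3)^3" using x by (intro power_mono) auto
    hence "K * \<bar>x\<bar>^3 \<le> K * (1/3)^3" using K0 by (intro mult_left_mono) auto
    hence a1: "K * \<bar>x\<bar>^3 \<le> K/27" by (simp add: power_divide)
    have a2: "\<mu> * \<bar>x\<bar> \<le> \<mu> * (1/3)" using x psi4(2) by (intro mult_left_mono) auto
    have a3: "\<bar>\<mu> * x\<bar> = \<mu> * \<bar>x\<bar>" using psi4(2) by (simp add: abs_mult)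
    have "\<bar>deriv \<psi> x\<bar> \<le> \<bar>\<mu> * x\<bar> + K * \<bar>x\<bar>^3" using K[OF x] by linarith
    thus ?thesis unfolding M_def using a1 a2 a3 by linarith
  qed
  define C where "C = 384*M + \<mu> + 6*K"
  have C0: "C \<ge> 0" unfolding C_def using M0 K0 psi4(2) by simp
  have "\<forall>\<xi>\<in>Lambda. \<bar>forces \<psi> \<xi>\<bar> \<le> C * cmod \<xi> powr (-3)"
  proof
    fix \<xi> assume x: "\<xi> \<in> Lambda"
    define r where "r = cmod \<xi>"
    have r0: "r > 0" unfolding r_def using Lambda_nz[OF x] by simp
    have pw: "cmod \<xi> powr (-3) = 1 / r^3" unfolding r_def[symmetric] using r0
      by (rule powr_neg_numeral)
    define th where "th i = Arg ((\<xi> + a_vec i)/\<xi>)/(2*pi)" for i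
    have th: "\<bar>th i\<bar> \<le> 1/3" if "i \<in> {1..6}" for i
      using dir_angle[OF x that] pi_gt_zero unfolding th_def by (simp add: field_simps)
    have F: "forces \<psi> \<xi> = (\<Sum>i\<in>{1..6}. deriv \<psi> (th i))"
      unfolding th_def by (rule forces_sum[where \<psi>=\<psi>, OF psi1 x])
    show "\<bar>forces \<psi> \<xi>\<bar> \<le> C * cmod \<xi> powr (-3)"
    proof (cases "r < 4")
      case True
      have "\<bar>forces \<psi> \<xi>\<bar> \<le> (\<Sum>i\<in>{1..6::nat}. \<bar>deriv \<psi> (th i)\<bar>)" unfolding F by (rule sum_abs)
      also have "\<dots> \<le> (\<Sum>i\<in>{1..6::nat}. M)" using gb th by (intro sum_mono) auto
      also have "\<dots> = 6 * M" by simp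
      finally have f6: "\<bar>forces \<psi> \<xi>\<bar> \<le> 6 * M" .
      have "r^3 \<le> 4^3" using True r0 by (intro power_mono) auto
      hence "6 * M * r^3 \<le> 6 * M * 4^3" using M0 by (intro mult_left_mono) auto
      hence "6 * M * r^3 \<le> 384 * M" by simp
      also have "\<dots> \<le> C" unfolding C_def using K0 psi4(2) by simp
      finally have "6 * M * r^3 \<le> C" .
      hence "6 * M \<le> C / r^3" using r0 by (simp add: pos_le_divide_eq)
      thus ?thesis using f6 pw by simp
    next
      case False
      hence r4: "cmod \<xi> \<ge> 4" unfolding r_def by simp
      define q where "q = 1 / r"
      have q0: "q > 0" "q \<le> 1" unfolding q_def using r0 False by auto
      have S: "\<bar>\<Sum>i\<in>{1..6}. Arg ((\<xi> + a_vec i)/\<xi>)\<bar> \<le> 2 * q^6"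
        using angle_sum[OF r4] unfolding q_def r_def .
      have E: "\<bar>th i\<bar> \<le> q" for i
      proof -
        have "\<bar>Arg ((\<xi> + a_vec i)/\<xi>)\<bar> \<le> 2 * q" using angle_each[OF r4, of i] unfolding q_def r_def by simp
        moreover have "pi \<ge> 1" using pi_gt3 by simp
        moreover have "2 * q \<le> 2 * pi * q" using mult_right_mono[of 2 "2*pi" q] \<open>pi \<ge> 1\<close> q0 by simp
        ultimately have "\<bar>Arg ((\<xi> + a_vec i)/\<xi>)\<bar> \<le> 2 * pi * q" by linarith
        thus ?thesis unfolding th_def using pi_gt_zero by (simp add: field_simps)
      qed
      have q63: "q^6 \<le> q^3" using q0 by (intro power_decreasing) auto
      have "forces \<psi> \<xi> = \<mu> * (\<Sum>i\<in>{1..6}. th i) + (\<Sum>i\<in>{1..6::nat}. deriv \<psi> (th i) - \<mu> * th i)"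
        unfolding F by (simp add: sum_distrib_left sum_subtractf)
      also have "(\<Sum>i\<in>{1..6::nat}. th i) = (\<Sum>i\<in>{1..6}. Arg ((\<xi> + a_vec i)/\<xi>)) / (2*pi)"
        unfolding th_def by (simp add: sum_divide_distrib)
      finally have FF: "forces \<psi> \<xi> = \<mu> * ((\<Sum>i\<in>{1..6}. Arg ((\<xi> + a_vec i)/\<xi>)) / (2*pi))
           + (\<Sum>i\<in>{1..6::nat}. deriv \<psi> (th i) - \<mu> * th i)" .
      have A1: "\<bar>\<mu> * ((\<Sum>i\<in>{1..6}. Arg ((\<xi> + a_vec i)/\<xi>)) / (2*pi))\<bar> \<le> \<mu> * q^3"
      proof -
        have "\<bar>(\<Sum>i\<in>{1..6}. Arg ((\<xi> + a_vec i)/\<xi>)) / (2*pi)\<bar> = \<bar>\<Sum>i\<in>{1..6}. Arg ((\<xi> + a_vec i)/\<xi>)\<bar> / (2*pi)"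
          using pi_gt_zero by simp
        also have "\<dots> \<le> 2 * q^6 / (2*pi)"
          using S pi_gt_zero by (intro divide_right_mono) auto
        also have "\<dots> = q^6 / pi" by simp
        also have "\<dots> \<le> q^6 / 1" using pi_gt3 q0 by (intro divide_left_mono) auto
        also have "\<dots> \<le> q^3" using q63 by simp
        finally have h: "\<bar>(\<Sum>i\<in>{1..6}. Arg ((\<xi> + a_vec i)/\<xi>)) / (2*pi)\<bar> \<le> q^3" .
        have "\<bar>\<mu> * ((\<Sum>i\<in>{1..6}. Arg ((\<xi> + a_vec i)/\<xi>)) / (2*pi))\<bar> = \<mu> * \<bar>(\<Sum>i\<in>{1..6}. Arg ((\<xi> + a_vec i)/\<xi>)) / (2*pi)\<bar>"
          using psi4(2) by (simp only: abs_mult abs_of_pos)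
        also have "\<dots> \<le> \<mu> * q^3" using mult_left_mono[OF h, of \<mu>] psi4(2) by simp
        finally show ?thesis .
      qed
      have A2: "\<bar>\<Sum>i\<in>{1..6::nat}. deriv \<psi> (th i) - \<mu> * th i\<bar> \<le> 6 * K * q^3"
      proof -
        have "\<bar>\<Sum>i\<in>{1..6::nat}. deriv \<psi> (th i) - \<mu> * th i\<bar> \<le> (\<Sum>i\<in>{1..6::nat}. \<bar>deriv \<psi> (th i) - \<mu> * th i\<bar>)"
          by (rule sum_abs)
        also have "\<dots> \<le> (\<Sum>i\<in>{1..6::nat}. K * q^3)"
        proof (rule sum_mono)
          fix i assume i: "i \<in> {1..6::nat}"
          have "\<bar>th i\<bar>^3 \<le> q^3" using E[of i] by (intro power_mono) auto
          thus "\<bar>deriv \<psi> (th i) - \<mu> * th i\<bar> \<le> K * q^3" using K[OF th[OF i]] K0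
            by (meson mult_left_mono order.trans)
        qed
        also have "\<dots> = 6 * K * q^3" by simp
        finally show ?thesis .
      qed
      have "\<bar>forces \<psi> \<xi>\<bar> \<le> \<mu> * q^3 + 6 * K * q^3" unfolding FF using A1 A2 by linarith
      also have "\<dots> \<le> C * q^3"
      proof -
        have "0 \<le> 384*M*q^3" using M0 q0 by simp
        moreover have "C*q^3 = 384*M*q^3 + \<mu>*q^3 + 6*K*q^3" unfolding C_def by (simp add: algebra_simps)
        ultimately show ?thesis by linarith
      qed
      also have "C * q^3 = C * cmod \<xi> powr (-3)" unfolding pw q_def by (simp add: power_divide)
      finally show ?thesis .
    qed
  qed
  thus ?thesis using C0 by blast
qed

lemma Lambda_ge: assumes "\<xi> \<in> Lambda" shows "cmod \<xi> \<ge> 1/4"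
proof (rule ccontr)
  assume "\<not> ?thesis" hence c: "cmod \<xi> < 1/4" by simp
  have "(Im \<xi>)^2 \<ge> 1/12" using Im_bound[OF assms, of 1] by simp
  moreover have "\<bar>Im \<xi>\<bar> \<le> cmod \<xi>" by (rule abs_Im_le_cmod)
  hence "\<bar>Im \<xi>\<bar> < 1/4" using c by linarith
  hence "\<bar>Im \<xi>\<bar>^2 \<le> (1/4)^2" by (intro power_mono) auto
  ultimately show False by (simp add: power_divide)
qed

lemma part4:
  assumes C0: "C \<ge> 0" and H: "\<forall>\<xi>\<in>Lambda. \<bar>f \<xi>\<bar> \<le> C * cmod \<xi> powr (-3)"
  shows "\<exists>C1 t. t > 2 \<and> (\<forall>\<xi>\<in>Lambda. \<bar>f \<xi>\<bar> \<le> C1 * (1 + cmod \<xi>) powr (-t))"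
proof (intro exI conjI ballI)
  show "(3::real) > 2" by simp
  fix \<xi> assume x: "\<xi> \<in> Lambda"
  define r where "r = cmod \<xi>"
  have r4: "r \<ge> 1/4" unfolding r_def by (rule Lambda_ge[OF x])
  have r0: "r > 0" using r4 by simp
  have "(1 + r)^3 \<le> (5*r)^3" using r4 by (intro power_mono) auto
  hence p: "(1 + r)^3 \<le> 125 * r^3" by (simp add: power_mult_distrib)
  have pos: "(1+r)^3 > 0" using r0 by simp
  have "C / r^3 = 125 * C / (125 * r^3)" by simp
  also have "\<dots> \<le> 125 * C / (1 + r)^3" using p pos C0 r0 by (intro divide_left_mono) auto
  finally have "C / r^3 \<le> 125 * C / (1 + r)^3" .
  moreover have "\<bar>f \<xi>\<bar> \<le> C / r^3"
  proof -
    have "cmod \<xi> powr (-3) = 1 / r^3" unfolding r_def[symmetric] using r0 by (rule powr_neg_numeral)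
    thus ?thesis using H x by auto
  qed
  moreover have "(1 + r) powr (- 3) = 1 / (1 + r)^3" using r0 by (intro powr_neg_numeral) simp
  ultimately show "\<bar>f \<xi>\<bar> \<le> (125 * C) * (1 + cmod \<xi>) powr (- 3)" unfolding r_def[symmetric] by simp
qed

theorem lemma4p4:
  fixes \<psi> :: "real \<Rightarrow> real" and \<mu> :: real
  assumes cont: "continuous_on UNIV \<psi>"
    and C4: "C4_off \<psi> (- halfints)"
    and psi1: "\<And>x. \<psi> (x + 1) = \<psi> x"
    and psi2a: "\<And>x. \<psi> (- x) = \<psi> x"
    and psi2b: "\<And>x. \<psi> (1/2 + (- x)) = \<psi> (1/2 + x)"
    and psi3: "\<And>r. \<psi> r = 0 \<longleftrightarrow> r \<in> \<int>"
    and psi4: "deriv (deriv \<psi>) 0 = \<mu>" "\<mu> > 0"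
    and psi5: "\<And>x. x \<in> {-1/2..1/2} \<Longrightarrow> \<psi> x \<ge> 1/2 * deriv (deriv \<psi>) 0 * x\<^sup>2"
  shows "DyClass yhat \<noteq> {}
       \<and> (\<forall>\<alpha>\<in>DyClass yhat. \<forall>b\<in>Bonds. \<alpha> b \<in> {-1/3..1/3})
       \<and> (\<exists>C. \<forall>\<xi>\<in>Lambda. \<bar>forces \<psi> \<xi>\<bar> \<le> C * cmod \<xi> powr (-3))
       \<and> (\<exists>C1 t. t > 2 \<and> (\<forall>\<xi>\<in>Lambda. \<bar>forces \<psi> \<xi>\<bar> \<le> C1 * (1 + cmod \<xi>) powr (-t)))"
proof -
  obtain C where C: "C \<ge> 0" "\<forall>\<xi>\<in>Lambda. \<bar>forces \<psi> \<xi>\<bar> \<le> C * cmod \<xi> powr (-3)"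
    using part3[OF C4 psi1 psi2a psi4] by blast
  show ?thesis using part1 part2 C part4[OF C] by blast
qed

end
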